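(* Let $q$ be a prime power and $1\le d\le e$ integers, and assume $q\ge 3$, or $q=2$ and $d\neq e$. Then for all $0\le i\le d$ and $0\le j\le d$, with $h_{\max}=\min\{j,d-i\}$, $$|T_{h_{\max}}(i,j)|-|T_{h_{\max}-1}(i,j)|\le |B_j(i)|\le |T_{h_{\max}}(i,j)|,$$ and the sign of $B_j(i)$ is $(-1)^{\max(0,\,j+i-d)}$.
   Context: For integers $m\ge 0$ and $l$, ${m\brack l}=\prod_{t=1}^{l}\frac{q^{m-t+1}-1}{q^t-1}$ for $l\ge0$ and $0$ for $l<0$. For $0\le i,j\le d$, $$B_j(i)=\sum_{h=0}^{\min\{j,d-i\}}(-1)^{j-h}q^{eh+\binom{j-h}{2}}{d-h\brack d-j}{d-i\brack h};$$ these are the eigenvalues of the bilinear forms graph $H_q(d,e,j)$ (vertices: $d\times e$ matrices over $\mathbb F_q$, adjacent iff their difference has rank $j$). $T_h(i,j)$ denotes the $h$-th summand for $0\le h\le\min\{j,d-i\}$, and $T_{-1}(i,j)=0$. *)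

theory Defs
  imports Complex_Main "HOL-Computational_Algebra.Primes"
begin

text \<open>Gaussian binomial coefficient [m, l]_q for l >= 0 (the case l < 0 never arises below).\<close>
definition gbinom :: "nat \<Rightarrow> nat \<Rightarrow> nat \<Rightarrow> real" where
  "gbinom q m l = (\<Prod>t=1..l. (real q ^ (m - t + 1) - 1) / (real q ^ t - 1))"

definition Tsum :: "nat \<Rightarrow> nat \<Rightarrow> nat \<Rightarrow> nat \<Rightarrow> nat \<Rightarrow> int \<Rightarrow> real" where
  "Tsum q d e i j h = (if h < 0 then 0 else
     (-1) ^ (j - nat h) * real q ^ (e * nat h + ((j - nat h) choose 2))
       * gbinom q (d - nat h) (d - j) * gbinom q (d - i) (nat h))"

definition Beig :: "nat \<Rightarrow> nat \<Rightarrow> nat \<Rightarrow> nat \<Rightarrow> nat \<Rightarrow> real" where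
  "Beig q d e i j = (\<Sum>h=0..min j (d - i). Tsum q d e i j (int h))"

end

theory Submission
  imports Defs
begin

lemma gbinom_pos:
  assumes "q \<ge> 2" "l \<le> m"
  shows "gbinom q m l > 0"
  unfolding gbinom_def
proof (rule prod_pos)
  fix t assume t: "t \<in> {1..l}"
  have "real q ^ (m - t + 1) > 1"
    using assms t by (intro one_less_power) auto
  moreover have "real q ^ t > 1"
    using assms t by (intro one_less_power) auto
  ultimately show "(real q ^ (m - t + 1) - 1) / (real q ^ t - 1) > 0" by simp
qed

lemma gbinom_Suc:
  assumes "k < m"
  shows "gbinom q m (Suc k) = gbinom q m k * ((real q ^ (m - k) - 1) / (real q ^ Suc k - 1))"
proof -
  have e: "m - Suc k + 1 = m - k" using assms by simp
  have "gbinom q m (Suc k) = gbinom q m k * ((real q ^ (m - Suc k + 1) - 1) / (real q ^ Suc k - 1))"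
    unfolding gbinom_def prod.cl_ivl_Suc by simp
  then show ?thesis by (simp only: e)
qed

lemma gbinom_shift:
  assumes "q \<ge> 2"
  shows "l \<le> m \<Longrightarrow> gbinom q (Suc m) l * (real q ^ (Suc m - l) - 1) = gbinom q m l * (real q ^ (Suc m) - 1)"
proof (induction l)
  case 0
  then show ?case by (simp add: gbinom_def)
next
  case (Suc l)
  have l: "l < m" using Suc.prems by simp
  have IH: "gbinom q (Suc m) l * (real q ^ (Suc m - l) - 1) = gbinom q m l * (real q ^ (Suc m) - 1)"
    using Suc by simp
  have pos: "real q ^ Suc l - 1 > 0"
  proof -
    have "real q ^ Suc l > 1" using assms by (intro one_less_power) auto
    then show ?thesis by simp
  qed
  have "gbinom q (Suc m) (Suc l) * (real q ^ (Suc m - Suc l) - 1)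
      = (gbinom q (Suc m) l * (real q ^ (Suc m - l) - 1)) * (real q ^ (m - l) - 1) / (real q ^ Suc l - 1)"
    using l by (simp add: gbinom_Suc)
  also have "\<dots> = gbinom q m l * (real q ^ (Suc m) - 1) * (real q ^ (m - l) - 1) / (real q ^ Suc l - 1)"
    using IH by simp
  also have "\<dots> = gbinom q m (Suc l) * (real q ^ (Suc m) - 1)"
    using l by (simp add: gbinom_Suc)
  finally show ?case .
qed

lemma key:
  fixes x :: real
  assumes x: "x \<ge> 2" and nk: "n + k = d" and c: "x^(d+1) \<le> (x-1)^2 * x^(e+v)"
  shows "x^u * (x^n - 1) * (x^(k+1) - 1) < x^e * (x^(v+1) - 1) * (x^(u+1) - 1)"
proof -
  have pu: "x^u \<ge> 1" and pv: "x^v \<ge> 1" and pn: "x^n \<ge> 1" and pe: "x^e \<ge> 1"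
    using x by (auto intro: one_le_power)
  have pk: "x^(k+1) > 1" using x by (intro one_less_power) auto
  have h1: "x^(u+1) - 1 \<ge> x^u * (x - 1)" using pu by (simp add: algebra_simps)
  have h2: "x^(v+1) - 1 \<ge> x^v * (x - 1)" using pv by (simp add: algebra_simps)
  have h3: "(x^n - 1) * (x^(k+1) - 1) < x^n * x^(k+1)"
    using pn pk by (simp add: algebra_simps)
  have e1: "x^n * x^(k+1) = x^(d+1)" using nk by (simp add: power_add[symmetric])
  have h3': "(x^n - 1) * (x^(k+1) - 1) < x^(d+1)" using h3 e1 by linarith
  have "x^u * (x^n - 1) * (x^(k+1) - 1) < x^u * x^(d+1)"
    by (subst mult.assoc) (rule mult_strict_left_mono[OF h3'], use pu in simp)
  also have "\<dots> \<le> x^u * ((x-1)^2 * x^(e+v))" using c pu by simp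
  also have "\<dots> = x^e * (x^v * (x - 1)) * (x^u * (x - 1))"
    by (simp add: power_add power2_eq_square algebra_simps)
  also have "\<dots> \<le> x^e * (x^(v+1) - 1) * (x^(u+1) - 1)"
  proof -
    have a: "0 \<le> x^v * (x - 1)" "0 \<le> x^u * (x - 1)" using x pu pv by auto
    have "x^e * (x^v * (x - 1)) \<le> x^e * (x^(v+1) - 1)" using h2 pe by simp
    then show ?thesis using h1 a pe
      by (intro mult_mono) auto
  qed
  finally show ?thesis .
qed

definition altS :: "(nat \<Rightarrow> real) \<Rightarrow> nat \<Rightarrow> real" where
  "altS c H = (\<Sum>h=0..H. (-1)^(H-h) * c h)"

lemma altS_Suc: "altS c (Suc H) = c (Suc H) - altS c H"
proof -
  have "(\<Sum>h=0..H. (-1)^(Suc H-h) * c h) = - (\<Sum>h=0..H. (-1)^(H-h) * c h)"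
    by (subst sum_negf[symmetric], rule sum.cong) (auto simp: Suc_diff_le)
  then show ?thesis unfolding altS_def by simp
qed

lemma altS_bounds:
  assumes "\<forall>h\<le>H. 0 < c h" "\<forall>h<H. c h < c (Suc h)"
  shows "0 < altS c H \<and> altS c H \<le> c H"
  using assms
proof (induction H)
  case 0
  then show ?case by (simp add: altS_def)
next
  case (Suc H)
  then have "0 < altS c H \<and> altS c H \<le> c H" by auto
  moreover have "c H < c (Suc H)" using Suc.prems by auto
  ultimately show ?case by (simp add: altS_Suc)
qed

theorem lemma4p1:
  fixes q d e i j :: nat
  assumes "\<exists>p k. prime p \<and> k \<ge> 1 \<and> q = p ^ k"
    and "1 \<le> d" and "d \<le> e"
    and "q \<ge> 3 \<or> (q = 2 \<and> d \<noteq> e)"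
    and "i \<le> d" and "j \<le> d"
  shows "\<bar>Tsum q d e i j (int (min j (d - i)))\<bar> - \<bar>Tsum q d e i j (int (min j (d - i)) - 1)\<bar>
           \<le> \<bar>Beig q d e i j\<bar>
       \<and> \<bar>Beig q d e i j\<bar> \<le> \<bar>Tsum q d e i j (int (min j (d - i)))\<bar>
       \<and> sgn (Beig q d e i j) = (-1) ^ (nat (max 0 (int j + int i - int d)))"
proof -
  have q2: "q \<ge> 2" using assms(4) by auto
  define x where "x = real q"
  have x2: "x \<ge> 2" using q2 by (simp add: x_def)
  define H where "H = min j (d - i)"
  define c where "c h = real q ^ (e*h + ((j-h) choose 2)) * gbinom q (d-h) (d-j) * gbinom q (d-i) h" for h
  have T: "Tsum q d e i j (int h) = (-1)^(j-h) * c h" for h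
    unfolding Tsum_def c_def by simp
  have cpos: "\<forall>h\<le>H. 0 < c h"
  proof (intro allI impI)
    fix h assume "h \<le> H"
    then have "d - j \<le> d - h" "h \<le> d - i" by (auto simp: H_def)
    then show "0 < c h" unfolding c_def using q2 by (auto intro!: mult_pos_pos gbinom_pos)
  qed
  have cinc: "\<forall>k<H. c k < c (Suc k)"
  proof (intro allI impI)
    fix k assume kH: "k < H"
    then have kj: "k < j" and kdi: "k < d - i" by (auto simp: H_def)
    define u where "u = j - Suc k"
    define v where "v = d - i - Suc k"
    define C where "C = (u choose 2)"
    define G1 where "G1 = gbinom q (d - Suc k) (d-j)"
    define G2 where "G2 = gbinom q (d-i) k"
    have G1p: "G1 > 0" unfolding G1_def using kj q2 by (intro gbinom_pos) auto
    have G2p: "G2 > 0" unfolding G2_def using kdi q2 by (intro gbinom_pos) auto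
    have xk: "x^(Suc k) - 1 > 0"
    proof - have "x^(Suc k) > 1" using x2 by (intro one_less_power) auto then show ?thesis by simp qed
    have xu: "x^(Suc u) - 1 > 0"
    proof - have "x^(Suc u) > 1" using x2 by (intro one_less_power) auto then show ?thesis by simp qed
    have sh: "gbinom q (Suc (d - Suc k)) (d-j) * (real q ^ (Suc (d - Suc k) - (d-j)) - 1)
        = G1 * (real q ^ (Suc (d - Suc k)) - 1)"
      unfolding G1_def using kj assms(6) q2 by (intro gbinom_shift) auto
    have e1: "Suc (d - Suc k) = d - k" using kj assms(6) by simp
    have e2: "d - k - (d - j) = Suc u" using kj assms(6) by (simp add: u_def)
    have A: "gbinom q (d-k) (d-j) = G1 * (x^(d-k) - 1) / (x^(Suc u) - 1)"
      using sh xu unfolding e1 e2 x_def by (simp add: field_simps)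
    have B: "gbinom q (d-i) (Suc k) = G2 * ((x^(Suc v) - 1) / (x^(Suc k) - 1))"
    proof -
      have "d - i - k = Suc v" using kdi by (simp add: v_def)
      then show ?thesis unfolding G2_def x_def using kdi by (simp add: gbinom_Suc)
    qed
    have jk: "j - k = Suc u" using kj by (simp add: u_def)
    have ch: "(Suc u choose 2) = C + u" unfolding C_def by (simp add: numeral_2_eq_2)
    define P where "P = x^(e*k + C) * G1 * G2"
    have Pp: "P > 0" unfolding P_def using x2 G1p G2p by simp
    have ck: "c k = P * (x^u * (x^(d-k) - 1) / (x^(Suc u) - 1))"
      unfolding c_def P_def jk ch A x_def[symmetric] G2_def[symmetric] using xu by (simp add: power_add field_simps)
    have cs: "c (Suc k) = P * (x^e * (x^(Suc v) - 1) / (x^(Suc k) - 1))"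
    proof -
      have "j - Suc k = u" by (simp add: u_def)
      then show ?thesis
        unfolding c_def P_def B G1_def[symmetric] C_def x_def[symmetric]
        using xk by (simp add: power_add field_simps)
    qed
    have cond: "x^(d+1) \<le> (x-1)^2 * x^(e+v)"
    proof (cases "e + v \<ge> d + 1")
      case True
      have "x^(d+1) \<le> x^(e+v)" using True x2 by (intro power_increasing) auto
      also have "\<dots> \<le> (x-1)^2 * x^(e+v)"
      proof -
        have "(x-1)^2 \<ge> 1" using x2 mult_mono[of 1 "x-1" 1 "x-1"] by (simp add: power2_eq_square)
        moreover have "x^(e+v) \<ge> 0" using x2 by simp
        ultimately show ?thesis using mult_right_mono[of 1 "(x-1)^2" "x^(e+v)"] by simp
      qed
      finally show ?thesis .
    next
      case False
      then have ed: "e = d" "v = 0" using assms(3) by auto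
      then have "q \<ge> 3" using assms(4) by auto
      then have x3: "x \<ge> 3" by (simp add: x_def)
      have "x \<le> (x-1)^2" using x3 mult_right_mono[of 2 "x-1" "x-1"] by (simp add: power2_eq_square)
      moreover have "x^d \<ge> 0" using x3 by simp
      ultimately have "x * x^d \<le> (x-1)^2 * x^d" by (simp add: mult_right_mono)
      then show ?thesis using ed by simp
    qed
    have kk: "x^u * (x^(d-k) - 1) * (x^(k+1) - 1) < x^e * (x^(v+1) - 1) * (x^(u+1) - 1)"
      using key[OF x2 _ cond, of "d-k" k u] kj assms(6) by simp
    have "x^u * (x^(d-k) - 1) / (x^(Suc u) - 1) < x^e * (x^(Suc v) - 1) / (x^(Suc k) - 1)"
      using kk xk xu by (simp add: divide_simps mult_ac)
    then show "c k < c (Suc k)" unfolding ck cs using Pp by (rule mult_strict_left_mono)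
  qed
  have S: "0 < altS c H \<and> altS c H \<le> c H" using altS_bounds[OF cpos cinc] .
  have Bq: "Beig q d e i j = (-1)^(j-H) * altS c H"
  proof -
    have "Beig q d e i j = (\<Sum>h=0..H. (-1)^(j-h) * c h)"
      unfolding Beig_def H_def[symmetric] by (simp add: T)
    also have "\<dots> = (\<Sum>h=0..H. (-1)^(j-H) * ((-1)^(H-h) * c h))"
    proof (rule sum.cong)
      fix h assume "h \<in> {0..H}"
      then have "j - h = (j - H) + (H - h)" by (auto simp: H_def)
      then show "(-1)^(j-h) * c h = (-1)^(j-H) * ((-1)^(H-h) * c h)" by (simp add: power_add)
    qed simp
    finally show ?thesis unfolding altS_def by (simp add: sum_distrib_left)
  qed
  have absB: "\<bar>Beig q d e i j\<bar> = altS c H" using Bq S by (simp add: abs_mult)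
  have absT: "\<bar>Tsum q d e i j (int H)\<bar> = c H" using T cpos[rule_format, of H] by (simp add: abs_mult)
  have low: "\<bar>Tsum q d e i j (int H)\<bar> - \<bar>Tsum q d e i j (int H - 1)\<bar> \<le> altS c H"
  proof (cases H)
    case 0
    have "altS c 0 = c 0" by (simp add: altS_def)
    then show ?thesis using absT 0 by (simp add: Tsum_def)
  next
    case (Suc m)
    have "int H - 1 = int m" using Suc by simp
    then have "\<bar>Tsum q d e i j (int H - 1)\<bar> = c m" using T cpos[rule_format, of m] Suc by (simp add: abs_mult)
    moreover have "0 < altS c m \<and> altS c m \<le> c m" using altS_bounds[of m c] cpos cinc Suc by auto
    ultimately show ?thesis using absT Suc by (simp add: altS_Suc)
  qed
  have nn: "nat (max 0 (int j + int i - int d)) = j - H" unfolding H_def using assms(5) by auto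
  have sg: "sgn (Beig q d e i j) = (-1)^(j-H)"
    using Bq S by (simp add: sgn_mult)
  show ?thesis using low absB absT S sg nn unfolding H_def by simp
qed

end
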